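(* Let $n \in \mathbb{N}$, let $S_0 \subset \mathbb{R}^n$ be closed and connected, and let $S$ be a connected component of $\mathbb{R}^n \setminus S_0$. Then: (i) $\partial S$ is connected; (ii) $\partial S \subset S_0$; (iii) for every family $\mathcal{U}$ of open connected subsets of $\mathbb{R}^n$ such that $\mathbb{R}^n \setminus S \subset \bigcup \mathcal{U}$ and $U \cap (\mathbb{R}^n \setminus S) \ne \emptyset$ for all $U \in \mathcal{U}$, the set $S \cap \bigcup \mathcal{U}$ is open and connected.
   Context: $\partial S$ denotes the topological boundary of $S$ in $\mathbb{R}^n$. *)

theory Defs
  imports "HOL-Analysis.Analysis"
begin

end

theory Submission
  imports Defs
begin

theorem proposition2p5:
  fixes S0 S :: "'a::euclidean_space set"
  assumes "closed S0" and "connected S0" and "S \<in> components (- S0)"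
  shows "connected (frontier S) \<and> frontier S \<subseteq> S0 \<and>
    (\<forall>\<U>. (\<forall>U\<in>\<U>. open U \<and> connected U) \<and> - S \<subseteq> \<Union>\<U> \<and> (\<forall>U\<in>\<U>. U \<inter> - S \<noteq> {})
       \<longrightarrow> open (S \<inter> \<Union>\<U>) \<and> connected (S \<inter> \<Union>\<U>))"
proof (intro conjI allI impI)
  show "connected (frontier S)"
    using assms connected_frontier_component_complement by blast
  show "frontier S \<subseteq> S0"
    using assms frontier_of_components_closed_complement by blast
  fix \<U> :: "'a set set"
  assume H: "(\<forall>U\<in>\<U>. open U \<and> connected U) \<and> - S \<subseteq> \<Union>\<U> \<and> (\<forall>U\<in>\<U>. U \<inter> - S \<noteq> {})"
  have oS: "open S"
    using assms open_components closed_def by blast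
  have cS: "connected S" using assms in_components_connected by blast
  have cC: "connected (- S)" using assms component_complement_connected by blast
  have oU: "open (\<Union>\<U>)" using H by blast
  show "open (S \<inter> \<Union>\<U>)" using oS oU by blast
  show "connected (S \<inter> \<Union>\<U>)"
  proof (cases "- S = {}")
    case True
    then have "\<U> = {}" using H by blast
    then show ?thesis by simp
  next
    case False
    let ?F = "(\<lambda>U. U \<union> - S) ` \<U>"
    have "connected (\<Union>?F)"
    proof (rule connected_Union)
      fix T assume "T \<in> ?F"
      then obtain U where "U \<in> \<U>" "T = U \<union> - S" by blast
      then show "connected T" using H cC connected_Un by blast
    next
      show "\<Inter>?F \<noteq> {}" using False by blast
    qed
    moreover have "\<Union>?F = \<Union>\<U>" using H False by blast
    ultimately have cU: "connected (\<Union>\<U>)" by simp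
    have "S \<union> \<Union>\<U> = UNIV" using H by blast
    then show ?thesis using open_unicoherent_UNIV[OF oS oU cS cU] by blast
  qed
qed

end
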